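(* Let $X$ be an abelian metric group and let $f:X\to\mathbb{R}$ be a subadditive function which is locally bounded above at some point of $X$ (i.e. bounded above on some neighbourhood of that point). Then $f$ is locally bounded at every point of $X$.
   Context: An abelian metric group is an abelian topological group whose topology is given by an invariant metric. A function $f:X\to\mathbb{R}$ is subadditive if $f(x+y)\le f(x)+f(y)$ for all $x,y\in X$. Locally bounded at a point means $|f|$ is bounded on some neighbourhood of that point. *)

theory Defs
  imports "HOL-Analysis.Analysis"
begin

definition subadditive :: "('a::plus \<Rightarrow> real) \<Rightarrow> bool" where
  "subadditive f \<longleftrightarrow> (\<forall>x y. f (x + y) \<le> f x + f y)"

definition invariant_metric :: "'a::{ab_group_add, metric_space} itself \<Rightarrow> bool" where
  "invariant_metric _ \<longleftrightarrow> (\<forall>x y z::'a. dist (x + z) (y + z) = dist x y)"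

end

theory Submission
  imports Defs
begin

theorem corollary2p3:
  fixes f :: "'a::{ab_group_add, metric_space} \<Rightarrow> real"
  assumes "invariant_metric TYPE('a)"
    and "subadditive f"
    and "\<exists>x0 U M. open U \<and> x0 \<in> U \<and> (\<forall>x\<in>U. f x \<le> M)"
  shows "\<forall>x. \<exists>U M. open U \<and> x \<in> U \<and> (\<forall>y\<in>U. \<bar>f y\<bar> \<le> M)"
proof
  fix x :: 'a
  have inv: "\<And>a b z::'a. dist (a + z) (b + z) = dist a b"
    using assms(1) unfolding invariant_metric_def by blast
  have sub: "\<And>a b. f (a + b) \<le> f a + f b"
    using assms(2) unfolding subadditive_def by blast
  obtain x0 U M where U: "open U" "x0 \<in> U" "\<forall>x\<in>U. f x \<le> M" using assms(3) by blast
  obtain r where r: "r > 0" "ball x0 r \<subseteq> U" using U(1,2) openE by blast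
  have upper: "f y \<le> M + f (x - x0)" if "dist y x < r" for y
  proof -
    have "dist (y - x + x0) x0 = dist (y - x) 0" using inv[where a="y - x" and b=0 and z=x0] by simp
    also have "\<dots> = dist y x" using inv[where a="y - x" and b=0 and z=x] by (simp only: diff_add_cancel add_0_left)
    finally have "y - x + x0 \<in> U" using that r(2) by (auto simp: dist_commute)
    hence "f (y - x + x0) \<le> M" using U(3) by blast
    moreover have "f y \<le> f (y - x + x0) + f (x - x0)"
      using sub[of "y - x + x0" "x - x0"] by (simp add: algebra_simps)
    ultimately show ?thesis by linarith
  qed
  have lower: "f x - M - f (- x0) \<le> f y" if "dist y x < r" for y
  proof -
    have "dist (x - y + x0) x0 = dist (x - y) 0" using inv[where a="x - y" and b=0 and z=x0] by simp
    also have "\<dots> = dist x y" using inv[where a="x - y" and b=0 and z=y] by (simp only: diff_add_cancel add_0_left)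
    finally have "x - y + x0 \<in> U" using that r(2) by (auto simp: dist_commute)
    hence "f (x - y + x0) \<le> M" using U(3) by blast
    moreover have "f (x - y) \<le> f (x - y + x0) + f (- x0)"
      using sub[of "x - y + x0" "- x0"] by (simp add: algebra_simps)
    moreover have "f x \<le> f y + f (x - y)"
      using sub[of y "x - y"] by (simp add: algebra_simps)
    ultimately show ?thesis by linarith
  qed
  show "\<exists>U M. open U \<and> x \<in> U \<and> (\<forall>y\<in>U. \<bar>f y\<bar> \<le> M)"
  proof (intro exI conjI ballI)
    show "open (ball x r)" by simp
    show "x \<in> ball x r" using r(1) by simp
    fix y assume "y \<in> ball x r"
    hence "dist y x < r" by (simp add: dist_commute)
    with upper lower show "\<bar>f y\<bar> \<le> max \<bar>M + f (x - x0)\<bar> \<bar>f x - M - f (- x0)\<bar>"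
      by (smt (verit))
  qed
qed

end
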